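(* On the triangle graph on $X=\{0,1,2\}$ over $\mathbb{F}_2$ with exterior algebra $\Omega_{min}=\Omega(\mathbb{Z}_3)$, the unique quantum metric $g=e^+\otimes e^-+e^-\otimes e^+$ has exactly four QLCs, given by $\nabla e^+=\alpha\, e^-\otimes e^-$, $\nabla e^-=\beta\, e^+\otimes e^+$ for $\alpha,\beta\in\{0,1\}$. These have curvature $R_\nabla e^\pm=\alpha\beta\,\mathrm{Vol}\otimes e^\pm$, Ricci tensors ${\rm Ricci}_+=\alpha\beta\, e^-\otimes e^+$, ${\rm Ricci}_-=\alpha\beta\, e^+\otimes e^-$ (for the lifts $i_+$, $i_-$ respectively) and Ricci scalars $S_\pm=\alpha\beta$.
   Context: $A=\mathbb{F}_2(\mathbb{Z}_3)$, functions on $\{0,1,2\}$; $(R_\pm f)(i)=f(i\pm1)$ mod 3. The calculus of the triangle graph (all arrows $i\to i\pm1$) has left-invariant basis $e^+=\sum_i i\to i+1$, $e^-=\sum_i i\to i-1$ over $A$, with $e^\pm f=(R_\pm f)e^\pm$ and ${\rm d} f=(R_+f+f)e^++(R_-f+f)e^-$. $\Omega^1\otimes_A\Omega^1$ is free with basis $e^a\otimes e^b$. $\Omega(\mathbb{Z}_3)$ is the exterior algebra generated by $A$ and $e^\pm$ with the additional relations $(e^\pm)^2=0$, $e^+\wedge e^-+e^-\wedge e^+=0$, ${\rm d} e^\pm=0$; $\Omega^2$ is spanned over $A$ by $\mathrm{Vol}=e^+\wedge e^-$. A bimodule connection is a linear $\nabla:\Omega^1\to\Omega^1\otimes_A\Omega^1$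 with $\nabla(f\omega)={\rm d} f\otimes\omega+f\nabla\omega$ and $\nabla(\omega f)=(\nabla\omega)f+\sigma(\omega\otimes{\rm d} f)$ for a bimodule map $\sigma$; it is a QLC if torsion $T_\nabla=\wedge\nabla-{\rm d}$ vanishes and $(\nabla\otimes\mathrm{id}+(\sigma\otimes\mathrm{id})(\mathrm{id}\otimes\nabla))g=0$. Curvature $R_\nabla=({\rm d}\otimes\mathrm{id}-(\wedge\otimes\mathrm{id})(\mathrm{id}\otimes\nabla))\nabla$. Inverse metric: the bimodule map with $(e^\pm,e^\mp)=1$, $(e^\pm,e^\pm)=0$. Lifts $i_\pm:\Omega^2\to\Omega^1\otimes_A\Omega^1$ are the bimodule maps with $i_\pm(\mathrm{Vol})=e^\pm\otimes e^\mp$; ${\rm Ricci}_\pm=((\ ,\ )\otimes\mathrm{id})(\mathrm{id}\otimes(i_\pm\otimes\mathrm{id})R_\nabla)g$ and $S_\pm=(\ ,\ ){\rm Ricci}_\pm$. *)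

theory Defs
  imports Main "HOL-Library.Z2" "HOL-Library.Numeral_Type" "HOL-Library.Function_Algebras"
begin

text \<open>The field is F_2 (type bit), the group Z_3 is the numeral type 3.
  A sign a :: bool stands for the generator e^+ (True) or e^- (False).
  All modules in the calculus are free LEFT A-modules on the stated bases, so elements
  are represented by their left coefficient functions:
  Omega^1             : bool => A           (omega = sum_a omega(a) e^a)
  Omega^1 (x) Omega^1 : bool => bool => A   (sum c(a,b) e^a (x) e^b)
  Omega^1 tensor cube : bool => bool => bool => A
  Omega^2             : A                   (coefficient of Vol = e^+ wedge e^-)
  Omega^2 (x) Omega^1 : bool => A           (sum r(b) Vol (x) e^b)\<close>

type_synonym A = "3 \<Rightarrow> bit"
type_synonym om1 = "bool \<Rightarrow> A"
type_synonym om11 = "bool \<Rightarrow> bool \<Rightarrow> A"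
type_synonym om111 = "bool \<Rightarrow> bool \<Rightarrow> bool \<Rightarrow> A"
type_synonym om1111 = "bool \<Rightarrow> bool \<Rightarrow> bool \<Rightarrow> bool \<Rightarrow> A"
type_synonym om2 = A
type_synonym om21 = "bool \<Rightarrow> A"

definition sh :: "bool \<Rightarrow> 3" where "sh a = (if a then 1 else -1)"

definition Rsh :: "bool \<Rightarrow> A \<Rightarrow> A" where "Rsh a f = (\<lambda>i. f (i + sh a))"

definition dA :: "A \<Rightarrow> om1" where "dA f = (\<lambda>a i. Rsh a f i + f i)"

definition E :: "bool \<Rightarrow> om1" where "E a = (\<lambda>b i. if b = a then 1 else 0)"
definition EE :: "bool \<Rightarrow> bool \<Rightarrow> om11" where
  "EE a b = (\<lambda>x y i. if x = a \<and> y = b then 1 else 0)"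
definition EV :: "bool \<Rightarrow> om21" where "EV b = (\<lambda>y i. if y = b then 1 else 0)"

text \<open>bimodule structure: left multiplication is pointwise on coefficients,
  right multiplication uses e^a f = (R_a f) e^a\<close>
definition lmul1 :: "A \<Rightarrow> om1 \<Rightarrow> om1" where "lmul1 f w = (\<lambda>a i. f i * w a i)"
definition rmul1 :: "om1 \<Rightarrow> A \<Rightarrow> om1" where "rmul1 w f = (\<lambda>a i. w a i * Rsh a f i)"
definition lmul2 :: "A \<Rightarrow> om11 \<Rightarrow> om11" where "lmul2 f c = (\<lambda>a b i. f i * c a b i)"
definition rmul2 :: "om11 \<Rightarrow> A \<Rightarrow> om11" where
  "rmul2 c f = (\<lambda>a b i. c a b i * Rsh a (Rsh b f) i)"

text \<open>tensor products over A of elements given by left coefficients: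
  (f e^a) (x) (g e^b) = f (R_a g) e^a (x) e^b\<close>
definition tens11 :: "om1 \<Rightarrow> om1 \<Rightarrow> om11" where
  "tens11 w v = (\<lambda>a b i. w a i * Rsh a (v b) i)"
definition tens12 :: "om1 \<Rightarrow> om11 \<Rightarrow> om111" where
  "tens12 w c = (\<lambda>a b b' i. w a i * Rsh a (c b b') i)"
definition tens21 :: "om11 \<Rightarrow> om1 \<Rightarrow> om111" where
  "tens21 c v = (\<lambda>a b b' i. c a b i * Rsh a (Rsh b (v b')) i)"
definition tens13 :: "om1 \<Rightarrow> om111 \<Rightarrow> om1111" where
  "tens13 w T = (\<lambda>a p q b' i. w a i * Rsh a (T p q b') i)"

text \<open>wedge product of generators: (e^a)^2 = 0, e^+ e^- = Vol, e^- e^+ = - Vol\<close>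
definition wsign :: "bool \<Rightarrow> bool \<Rightarrow> bit" where
  "wsign a b = (if a = b then 0 else if a then 1 else -1)"
definition wedge11 :: "om11 \<Rightarrow> om2" where
  "wedge11 c = (\<lambda>i. \<Sum>a\<in>UNIV. \<Sum>b\<in>UNIV. c a b i * wsign a b)"
definition wedge_id :: "om111 \<Rightarrow> om21" where
  "wedge_id T = (\<lambda>b' i. \<Sum>a\<in>UNIV. \<Sum>b\<in>UNIV. T a b b' i * wsign a b)"

text \<open>exterior derivative on 1-forms: d(f e^a) = df wedge e^a, since d e^a = 0\<close>
definition d1 :: "om1 \<Rightarrow> om2" where
  "d1 w = wedge11 (\<lambda>b a. dA (w a) b)"

definition sigma_id :: "(om11 \<Rightarrow> om11) \<Rightarrow> om111 \<Rightarrow> om111" where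
  "sigma_id \<sigma> T = (\<lambda>a b b'. \<sigma> (\<lambda>x y. T x y b') a b)"

definition gmet :: om11 where "gmet = EE True False + EE False True"
definition ginv :: "bool \<Rightarrow> bool \<Rightarrow> bit" where "ginv a b = (if a \<noteq> b then 1 else 0)"
definition pair :: "om11 \<Rightarrow> A" where
  "pair c = (\<lambda>i. \<Sum>a\<in>UNIV. \<Sum>b\<in>UNIV. c a b i * ginv a b)"
definition pair_id :: "om1111 \<Rightarrow> om11" where
  "pair_id T = (\<lambda>q b' i. \<Sum>a\<in>UNIV. \<Sum>p\<in>UNIV. T a p q b' i * ginv a p)"

definition additive :: "('a::plus \<Rightarrow> 'b::plus) \<Rightarrow> bool" where
  "additive F \<longleftrightarrow> (\<forall>x y. F (x + y) = F x + F y)"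

definition left_connection :: "(om1 \<Rightarrow> om11) \<Rightarrow> bool" where
  "left_connection nb \<longleftrightarrow> additive nb \<and>
     (\<forall>k::bit. \<forall>w. nb (lmul1 (\<lambda>_. k) w) = lmul2 (\<lambda>_. k) (nb w)) \<and>
     (\<forall>f w. nb (lmul1 f w) = tens11 (dA f) w + lmul2 f (nb w))"

definition bimodule_map2 :: "(om11 \<Rightarrow> om11) \<Rightarrow> bool" where
  "bimodule_map2 \<sigma> \<longleftrightarrow> additive \<sigma> \<and>
     (\<forall>f c. \<sigma> (lmul2 f c) = lmul2 f (\<sigma> c)) \<and> (\<forall>f c. \<sigma> (rmul2 c f) = rmul2 (\<sigma> c) f)"

definition right_leibniz :: "(om1 \<Rightarrow> om11) \<Rightarrow> (om11 \<Rightarrow> om11) \<Rightarrow> bool" where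
  "right_leibniz nb \<sigma> \<longleftrightarrow> (\<forall>w f. nb (rmul1 w f) = rmul2 (nb w) f + \<sigma> (tens11 w (dA f)))"

definition torsion_free :: "(om1 \<Rightarrow> om11) \<Rightarrow> bool" where
  "torsion_free nb \<longleftrightarrow> (\<forall>w. wedge11 (nb w) - d1 w = 0)"

text \<open>(nabla (x) id + (sigma (x) id)(id (x) nabla)) c, writing c = sum_b (c(.,b)) (x) e^b\<close>
definition met_deriv :: "(om1 \<Rightarrow> om11) \<Rightarrow> (om11 \<Rightarrow> om11) \<Rightarrow> om11 \<Rightarrow> om111" where
  "met_deriv nb \<sigma> c = (\<Sum>b\<in>UNIV. tens21 (nb (\<lambda>a. c a b)) (E b)
        + sigma_id \<sigma> (tens12 (\<lambda>a. c a b) (nb (E b))))"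

definition QLC :: "(om1 \<Rightarrow> om11) \<Rightarrow> bool" where
  "QLC nb \<longleftrightarrow> left_connection nb \<and> torsion_free nb \<and>
     (\<exists>\<sigma>. bimodule_map2 \<sigma> \<and> right_leibniz nb \<sigma> \<and> met_deriv nb \<sigma> gmet = 0)"

definition conn :: "bit \<Rightarrow> bit \<Rightarrow> om1 \<Rightarrow> om11" where
  "conn \<alpha> \<beta> w = (\<Sum>a\<in>UNIV. tens11 (dA (w a)) (E a)
        + lmul2 (w a) (if a then lmul2 (\<lambda>_. \<alpha>) (EE False False) else lmul2 (\<lambda>_. \<beta>) (EE True True)))"

text \<open>R = (d (x) id - (wedge (x) id)(id (x) nabla)) nabla, with
  nabla w = sum_b xi_b (x) e^b\<close>
definition curv :: "(om1 \<Rightarrow> om11) \<Rightarrow> om1 \<Rightarrow> om21" where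
  "curv nb w = (\<Sum>b\<in>UNIV. lmul1 (d1 (\<lambda>a. nb w a b)) (EV b)
        - wedge_id (tens12 (\<lambda>a. nb w a b) (nb (E b))))"

text \<open>the lift i(Vol) = sum L(p,q) e^p (x) e^q, applied as i (x) id\<close>
definition lift_id :: "(bool \<Rightarrow> bool \<Rightarrow> bit) \<Rightarrow> om21 \<Rightarrow> om111" where
  "lift_id L r = (\<lambda>p q b' i. L p q * r b' i)"
definition iplus :: "bool \<Rightarrow> bool \<Rightarrow> bit" where
  "iplus p q = (if p \<and> \<not> q then 1 else 0)"
definition iminus :: "bool \<Rightarrow> bool \<Rightarrow> bit" where
  "iminus p q = (if \<not> p \<and> q then 1 else 0)"

text \<open>Ricci = (( , ) (x) id)(id (x) (i (x) id) R) g, writing g = sum_b g(.,b) (x) e^b\<close>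
definition ricci :: "(bool \<Rightarrow> bool \<Rightarrow> bit) \<Rightarrow> (om1 \<Rightarrow> om11) \<Rightarrow> om11" where
  "ricci L nb = pair_id (\<Sum>b\<in>UNIV. tens13 (\<lambda>a. gmet a b) (lift_id L (curv nb (E b))))"

definition ricci_scalar :: "(bool \<Rightarrow> bool \<Rightarrow> bit) \<Rightarrow> (om1 \<Rightarrow> om11) \<Rightarrow> A" where
  "ricci_scalar L nb = pair (ricci L nb)"

end

theory Submission
  imports Defs
begin
lemma three_cases: "(i::3) = 0 \<or> i = 1 \<or> i = 2"
proof (cases i)
  case (of_int z)
  then have "z = 0 \<or> z = 1 \<or> z = 2" by auto
  then show ?thesis using of_int by auto
qed
lemma all3: "(\<forall>i::3. P i) \<longleftrightarrow> P 0 \<and> P 1 \<and> P 2" using three_cases by metis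
lemma arith3: "(1::3) + 1 = 2" "(2::3) + 1 = 0" "(1::3) + 2 = 0" "(2::3)+2 = 1" "-(1::3) = 2" "-(2::3) = 1"
  "(0::3) \<noteq> 1" "(0::3) \<noteq> 2" "(1::3) \<noteq> 2" "(1::3) \<noteq> 0" "(2::3) \<noteq> 0" "(2::3) \<noteq> 1"
  by simp_all
lemma bit01: "(x::bit) = 0 \<or> x = 1" by auto
lemma bitc: "(x::bit) + x = 0" "x + (x + y) = y" "x * x = x" "x * (x * y) = x * y" "- x = x" "x - y = x + y"
  using bit01[of x] bit01[of y] by auto
lemma sh_simps: "sh True = 1" "sh False = 2" by (simp_all add: sh_def)
lemma sum_bool: "(\<Sum>a\<in>UNIV. f a) = f True + f False" for f :: "bool \<Rightarrow> 'a::comm_monoid_add"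
  by (simp add: UNIV_bool add.commute)
lemma bool_eqs: "(True = False) = False" "(False = True) = False" "(True = True) = True" "(False = False) = True"
  by simp_all

lemmas bring = add.assoc add.commute add.left_commute mult.assoc mult.commute mult.left_commute
  distrib_left distrib_right bitc mult_1 mult_1_right mult_zero_left mult_zero_right add_0 add_0_right simp_thms

lemmas U0 = fun_eq_iff all_bool_eq sum_bool plus_fun_apply zero_fun_apply fun_diff_def
  if_True if_False bool_eqs simp_thms sh_simps add.assoc arith3 add_0_right add_0 bitc
  mult_1 mult_1_right mult_zero_left mult_zero_right

lemmas D = Rsh_def dA_def E_def EE_def EV_def lmul1_def rmul1_def lmul2_def rmul2_def
  tens11_def tens12_def tens21_def tens13_def wsign_def wedge11_def wedge_id_def d1_def sigma_id_def
  gmet_def ginv_def pair_def pair_id_def curv_def lift_id_def iplus_def iminus_def ricci_def ricci_scalar_def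

definition gen :: "om11 \<Rightarrow> om11 \<Rightarrow> om1 \<Rightarrow> om11" where
  "gen X Y w = (\<lambda>x y i. w y (i + sh x) + w y i + w True i * X x y i + w False i * Y x y i)"

lemma lc_gen:
  assumes "left_connection nb"
  shows "nb = gen (nb (E True)) (nb (E False))"
proof
  fix w
  have w: "w = lmul1 (w True) (E True) + lmul1 (w False) (E False)"
    by (simp add: fun_eq_iff all_bool_eq lmul1_def E_def)
  have "nb w = nb (lmul1 (w True) (E True)) + nb (lmul1 (w False) (E False))"
    using assms unfolding left_connection_def additive_def by (metis w)
  also have "\<dots> = tens11 (dA (w True)) (E True) + lmul2 (w True) (nb (E True))
     + (tens11 (dA (w False)) (E False) + lmul2 (w False) (nb (E False)))"
    using assms unfolding left_connection_def by simp
  also have "\<dots> = gen (nb (E True)) (nb (E False)) w"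
    unfolding gen_def
    unfolding gen_def by (simp only: U0 D; (simp only: bring)?)
  finally show "nb w = gen (nb (E True)) (nb (E False)) w" .
qed


lemma conn_gen: "conn al be = gen (lmul2 (\<lambda>_. al) (EE False False)) (lmul2 (\<lambda>_. be) (EE True True))"
  unfolding gen_def conn_def
  by (simp only: U0 D; (simp only: bring)?)

lemma gen_lc: "left_connection (gen X Y)"
  unfolding left_connection_def additive_def gen_def
  by (simp only: U0 D; (simp only: bring)?)

lemma gen_tf: "X True False = X False True \<Longrightarrow> Y True False = Y False True \<Longrightarrow> torsion_free (gen X Y)"
  unfolding torsion_free_def gen_def
  by (simp only: U0 D; (simp only: bring)?)

definition flip :: "om11 \<Rightarrow> om11" where "flip c = (\<lambda>x y i. c y x i)"

lemma conn_QLC: "QLC (conn al be)"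
proof -
  let ?X = "lmul2 (\<lambda>_. al) (EE False False)" and ?Y = "lmul2 (\<lambda>_. be) (EE True True)"
  have tf: "?X True False = ?X False True" "?Y True False = ?Y False True"
    by (simp only: U0 D)+
  have bm: "bimodule_map2 flip"
    unfolding bimodule_map2_def additive_def flip_def
    by (simp only: U0 D; (simp only: bring)?)
  have rl: "right_leibniz (gen ?X ?Y) flip"
    unfolding right_leibniz_def flip_def gen_def
    by (simp only: U0 D; (simp only: bring)?)
  have mc: "met_deriv (gen ?X ?Y) flip gmet = 0"
    unfolding met_deriv_def flip_def gen_def
    by (simp only: U0 D; (simp only: bring)?)
  show ?thesis unfolding conn_gen QLC_def
    using gen_lc gen_tf[OF tf] bm rl mc by blast
qed

lemma conn_curv: "curv (conn al be) (E a) = lmul1 (\<lambda>_. al * be) (EV a)"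
  unfolding conn_gen gen_def
  by (cases a; simp only: U0 D; (simp only: bring)?)

lemma conn_ricci: "ricci iplus (conn al be) = lmul2 (\<lambda>_. al * be) (EE False True)"
   "ricci iminus (conn al be) = lmul2 (\<lambda>_. al * be) (EE True False)"
   "ricci_scalar iplus (conn al be) = (\<lambda>_. al * be)"
   "ricci_scalar iminus (conn al be) = (\<lambda>_. al * be)"
  unfolding conn_gen gen_def
  by (simp only: U0 D; (simp only: bring)?)+

lemmas idx = add_left_cancel add_cancel_left_left add_cancel_left_right add_cancel_right_left add_cancel_right_right

lemma bm_rep:
  assumes bm: "bimodule_map2 \<sigma>"
  shows "\<sigma> c = (\<lambda>x y i. c True True i * \<sigma> (EE True True) x y i + c True False i * \<sigma> (EE True False) x y i
     + c False True i * \<sigma> (EE False True) x y i + c False False i * \<sigma> (EE False False) x y i)"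
proof -
  have c: "c = lmul2 (c True True) (EE True True) + lmul2 (c True False) (EE True False)
      + lmul2 (c False True) (EE False True) + lmul2 (c False False) (EE False False)"
    by (simp only: U0 D; (simp only: bring)?)
  have "\<sigma> c = \<sigma> (lmul2 (c True True) (EE True True)) + \<sigma> (lmul2 (c True False) (EE True False))
      + \<sigma> (lmul2 (c False True) (EE False True)) + \<sigma> (lmul2 (c False False) (EE False False))"
    using bm unfolding bimodule_map2_def additive_def by (metis c)
  also have "\<dots> = lmul2 (c True True) (\<sigma> (EE True True)) + lmul2 (c True False) (\<sigma> (EE True False))
      + lmul2 (c False True) (\<sigma> (EE False True)) + lmul2 (c False False) (\<sigma> (EE False False))"
    using bm unfolding bimodule_map2_def by simp
  finally show ?thesis by (simp add: fun_eq_iff lmul2_def)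
qed

lemma bm_zero:
  assumes bm: "bimodule_map2 \<sigma>" and ne: "sh x + sh y \<noteq> sh a + sh b"
  shows "\<sigma> (EE a b) x y i = 0"
proof -
  define f :: A where "f = (\<lambda>j. if j = i + sh a + sh b then 1 else 0)"
  have r: "rmul2 (EE a b) f = lmul2 (\<lambda>j. f (j + sh a + sh b)) (EE a b)"
    by (auto simp: fun_eq_iff rmul2_def lmul2_def EE_def Rsh_def add.assoc add.commute)
  have "lmul2 (\<lambda>j. f (j + sh a + sh b)) (\<sigma> (EE a b)) = rmul2 (\<sigma> (EE a b)) f"
    using bm unfolding bimodule_map2_def by (metis r)
  then have "f (i + sh a + sh b) * \<sigma> (EE a b) x y i = \<sigma> (EE a b) x y i * f (i + sh x + sh y)"
    unfolding lmul2_def rmul2_def Rsh_def by (metis add.assoc add.commute)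
  moreover have "i + sh x + sh y \<noteq> i + sh a + sh b" using ne by (simp add: add.assoc)
  ultimately show ?thesis by (simp add: f_def)
qed

lemma bm_zeros: assumes "bimodule_map2 \<sigma>" shows
 "\<sigma> (EE True True) True False i = 0" "\<sigma> (EE True True) False True i = 0" "\<sigma> (EE True True) False False i = 0"
 "\<sigma> (EE False False) True True i = 0" "\<sigma> (EE False False) True False i = 0" "\<sigma> (EE False False) False True i = 0"
 "\<sigma> (EE True False) True True i = 0" "\<sigma> (EE True False) False False i = 0"
 "\<sigma> (EE False True) True True i = 0" "\<sigma> (EE False True) False False i = 0"
  by (rule bm_zero[OF assms]; simp add: sh_simps arith3)+

lemma hard:
  assumes q: "QLC nb"
  shows "\<exists>al be. nb = conn al be"
proof -
  obtain \<sigma> where lc: "left_connection nb" and tf: "torsion_free nb" and bm: "bimodule_map2 \<sigma>"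
    and rl: "right_leibniz nb \<sigma>" and mc: "met_deriv nb \<sigma> gmet = 0"
    using q unfolding QLC_def by blast
  define X where "X = nb (E True)"
  define Y where "Y = nb (E False)"
  have nbg: "nb = gen X Y" unfolding X_def Y_def by (rule lc_gen[OF lc])
  note rep = bm_rep[OF bm]
  note zs = bm_zeros[OF bm]
  define S where "S a b = \<sigma> (EE a b)" for a b
  have repS: "\<sigma> c = (\<lambda>x y i. c True True i * S True True x y i + c True False i * S True False x y i
     + c False True i * S False True x y i + c False False i * S False False x y i)" for c
    unfolding S_def by (rule rep)
  have zsS: "S True True True False i = 0" "S True True False True i = 0" "S True True False False i = 0"
 "S False False True True i = 0" "S False False True False i = 0" "S False False False True i = 0"
 "S True False True True i = 0" "S True False False False i = 0"
 "S False True True True i = 0" "S False True False False i = 0" for i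
    unfolding S_def by (rule zs)+
  have tfT: "X True False i + X False True i = 0" for i
    using fun_cong[OF tf[unfolded torsion_free_def nbg, rule_format, of "E True"], of i]
    by (simp only: U0 D gen_def; (simp only: bring)?)
  have RLT: "gen X Y (rmul1 (E a) f) x y i = rmul2 (gen X Y (E a)) f x y i + \<sigma> (tens11 (E a) (dA f)) x y i" for a f x y i
    using rl unfolding right_leibniz_def nbg by simp
  have R1: "S True True True True i = 1 + X True True i" for i
    using RLT[of True "\<lambda>j. if j = i + 1 then 1 else 0" True True i]
    unfolding repS
    by (simp only: U0 D gen_def zsS idx; (simp only: bring)?)
  have R2: "S True False True False i = X True False i" for i
    using RLT[of True "\<lambda>j. if j = i + 1 then 1 else 0" True False i]
    unfolding repS
    by (simp only: U0 D gen_def zsS idx; (simp only: bring)?)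
  have R3: "S True False False True i = 1 + X False True i" for i
    using RLT[of True "\<lambda>j. if j = i + 1 then 1 else 0" False True i]
    unfolding repS
    by (simp only: U0 D gen_def zsS idx; (simp only: bring)?)
  have R4: "S False False False False i = 1 + Y False False i" for i
    using RLT[of False "\<lambda>j. if j = i + 2 then 1 else 0" False False i]
    unfolding repS
    by (simp only: U0 D gen_def zsS idx; (simp only: bring)?)
  have R5: "S False True False True i = Y False True i" for i
    using RLT[of False "\<lambda>j. if j = i + 2 then 1 else 0" False True i]
    unfolding repS
    by (simp only: U0 D gen_def zsS idx; (simp only: bring)?)
  have R6: "S False True True False i = 1 + Y True False i" for i
    using RLT[of False "\<lambda>j. if j = i + 2 then 1 else 0" True False i]
    unfolding repS
    by (simp only: U0 D gen_def zsS idx; (simp only: bring)?)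
  have tfF: "Y True False i + Y False True i = 0" for i
    using fun_cong[OF tf[unfolded torsion_free_def nbg, rule_format, of "E False"], of i]
    by (simp only: U0 D gen_def; (simp only: bring)?)
  have tX: "X False True i = X True False i" for i using tfT[of i] bit01[of "X False True i"] by auto
  have tY: "Y False True i = Y True False i" for i using tfF[of i] bit01[of "Y False True i"] by auto
  have M: "met_deriv (gen X Y) \<sigma> gmet a b b' i = 0" for a b b' i using mc nbg by simp
  note Msimps = repS U0 D gen_def zsS R1 R2 R3 R4 R5 R6 tX tY
  have C1: "X True True i = 0 \<and> Y True False (i + 1) = 0" for i
    using M[of True True False i] bit01[of "X True True i"] bit01[of "Y True False (i + 1)"]
    unfolding met_deriv_def
    by (simp only: Msimps; simp only: bring; auto)
  have C2: "X True False (i + 2) = 0 \<and> Y False False i = 0" for i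
    using M[of False False True i] bit01[of "X True False (i + 2)"] bit01[of "Y False False i"]
    unfolding met_deriv_def
    by (simp only: Msimps; simp only: bring; auto)
  have sh1: "j + 2 + 1 = j" "j + 1 + 2 = j" for j :: 3 using three_cases[of j] by (auto simp: arith3)
  have XTT: "X True True i = 0" for i using C1 by blast
  have YFF: "Y False False i = 0" for i using C2 by blast
  have YTF: "Y True False i = 0" for i using C1[of "i + 2"] sh1 by simp
  have XTF: "X True False i = 0" for i using C2[of "i + 1"] sh1 by simp
  have C3: "Y True True i = Y True True (i + 1)" for i
    using M[of True True True i] bit01[of "Y True True i"] bit01[of "Y True True (i + 1)"]
    unfolding met_deriv_def
    by (simp only: Msimps XTT YFF YTF XTF; simp only: bring; auto)
  have C4: "X False False i = X False False (i + 2)" for i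
    using M[of False False False i] bit01[of "X False False i"] bit01[of "X False False (i + 2)"]
    unfolding met_deriv_def
    by (simp only: Msimps XTT YFF YTF XTF; simp only: bring; auto)
  have y01: "Y True True 0 = Y True True 1" using C3[of 0] by (simp only: add_0)
  have y12: "Y True True 1 = Y True True 2" using C3[of 1] by (simp only: arith3)
  have YTT: "Y True True i = Y True True 0" for i
    using three_cases[of i] y01 y12 by metis
  have x02: "X False False 0 = X False False 2" using C4[of 0] by (simp only: add_0)
  have x21: "X False False 2 = X False False 1" using C4[of 2] by (simp only: arith3)
  have XFF: "X False False i = X False False 0" for i
    using three_cases[of i] x02 x21 by metis
  obtain al where XFF': "\<And>i. X False False i = al" using XFF by blast
  obtain be where YTT': "\<And>i. Y True True i = be" using YTT by blast
  have ha: "X = lmul2 (\<lambda>_. al) (EE False False)"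
    by (simp only: fun_eq_iff all_bool_eq lmul2_def EE_def XTT XTF XFF' tX bool_eqs simp_thms if_True if_False mult_1_right mult_zero_right) 
  have hb: "Y = lmul2 (\<lambda>_. be) (EE True True)"
    by (simp only: fun_eq_iff all_bool_eq lmul2_def EE_def YTT' YTF YFF tY bool_eqs simp_thms if_True if_False mult_1_right mult_zero_right) 
  have "nb = conn al be" by (simp only: nbg conn_gen ha hb)
  then show ?thesis by blast
qed

lemma conn_val: "conn al be (E True) False False 0 = al" "conn al be (E False) True True 0 = be"
  unfolding conn_gen gen_def by (simp only: U0 D; (simp only: bring)?)+

lemma conn_inj: "conn a b = conn c d \<Longrightarrow> a = c \<and> b = d"
proof -
  assume h: "conn a b = conn c d"
  have "a = c" using conn_val(1)[of a b] conn_val(1)[of c d] h by simp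
  moreover have "b = d" using conn_val(2)[of a b] conn_val(2)[of c d] h by simp
  ultimately show ?thesis by simp
qed

lemma QLC_set: "{nb. QLC nb} = {conn al be | al be. True}"
proof (rule set_eqI, rule iffI)
  fix nb assume "nb \<in> {nb. QLC nb}"
  then show "nb \<in> {conn al be | al be. True}" using hard by simp
next
  fix nb assume "nb \<in> {conn al be | al be. True}"
  then show "nb \<in> {nb. QLC nb}" using conn_QLC by auto
qed

lemma card4: "card {conn al be | al be. True} = 4"
proof -
  have e: "{conn al be | al be. True} = {conn 0 0, conn 0 1, conn 1 0, conn 1 1}"
  proof (rule set_eqI, rule iffI)
    fix nb assume "nb \<in> {conn al be | al be. True}"
    then obtain al be where nb: "nb = conn al be" by blast
    show "nb \<in> {conn 0 0, conn 0 1, conn 1 0, conn 1 1}"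
      using bit01[of al] bit01[of be] nb by auto
  next
    fix nb assume "nb \<in> {conn 0 0, conn 0 1, conn 1 0, conn 1 1}"
    then show "nb \<in> {conn al be | al be. True}" by blast
  qed
  have d: "conn 0 0 \<noteq> conn 0 1" "conn 0 0 \<noteq> conn 1 0" "conn 0 0 \<noteq> conn 1 1"
    "conn 0 1 \<noteq> conn 1 0" "conn 0 1 \<noteq> conn 1 1" "conn 1 0 \<noteq> conn 1 1"
    using conn_inj[of 0 0 0 1] conn_inj[of 0 0 1 0] conn_inj[of 0 0 1 1]
      conn_inj[of 0 1 1 0] conn_inj[of 0 1 1 1] conn_inj[of 1 0 1 1] by auto
  show ?thesis unfolding e using d by simp
qed

theorem proposition4p4:
  shows "{nb. QLC nb} = {conn \<alpha> \<beta> | \<alpha> \<beta>. True}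
    \<and> card {nb. QLC nb} = 4
    \<and> (\<forall>\<alpha> \<beta>.
         (\<forall>a. curv (conn \<alpha> \<beta>) (E a) = lmul1 (\<lambda>_. \<alpha> * \<beta>) (EV a))
       \<and> ricci iplus (conn \<alpha> \<beta>) = lmul2 (\<lambda>_. \<alpha> * \<beta>) (EE False True)
       \<and> ricci iminus (conn \<alpha> \<beta>) = lmul2 (\<lambda>_. \<alpha> * \<beta>) (EE True False)
       \<and> ricci_scalar iplus (conn \<alpha> \<beta>) = (\<lambda>_. \<alpha> * \<beta>)
       \<and> ricci_scalar iminus (conn \<alpha> \<beta>) = (\<lambda>_. \<alpha> * \<beta>))"
  using QLC_set card4 conn_curv conn_ricci by presburger

end
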